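(* Let $M$ be a Puiseux monoid, $R$ a GCD-domain, and $F$ the field of fractions of $R$. Then an element $f \in R[M]\setminus R$ is irreducible in $R[M]$ if and only if $f$ is primitive in $R[M]$ and $f$ is irreducible in $F[M]$.
   Context: A Puiseux monoid is an additive submonoid of $(\mathbb{Q}_{\ge 0},+)$. For a commutative ring $R$ and a Puiseux monoid $M$, $R[M]$ denotes the semigroup ring of $M$ over $R$ (finite formal sums $\sum_{s\in M} f(s)X^s$ with $X^sX^t=X^{s+t}$). Every nonzero $f\in R[M]$ has a unique canonical form $f=\alpha_1X^{q_1}+\dots+\alpha_kX^{q_k}$ with all $\alpha_i\neq 0$ and $q_1>\dots>q_k$. For $R$ a GCD-domain, the content $\mathsf{c}(f)$ is the set of greatest common divisors of $\alpha_1,\dots,\alpha_k$ in $R$, and $f$ is called primitive if $\mathsf{c}(f)\subseteq R^\times$ (the units of $R$). $R[M]$ is an integral domain whose units are exactly $R^\times$ when $R$ is an integral domain. *)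

theory Defs
  imports Complex_Main "HOL-Library.Poly_Mapping" "HOL-Computational_Algebra.Fraction_Field"
begin

definition puiseux_monoid :: "rat set \<Rightarrow> bool" where
  "puiseux_monoid M \<longleftrightarrow> M \<subseteq> {q. 0 \<le> q} \<and> 0 \<in> M \<and> (\<forall>x\<in>M. \<forall>y\<in>M. x + y \<in> M)"

text \<open>The semigroup ring R[M], realised inside the monoid algebra rat =>0 'a
  (finitely supported functions with convolution product) as those elements
  whose support lies in M.\<close>
definition semigroup_ring :: "rat set \<Rightarrow> (rat \<Rightarrow>\<^sub>0 'a::comm_ring_1) set" where
  "semigroup_ring M = {f. Poly_Mapping.keys f \<subseteq> M}"

definition unit_in :: "'b::comm_ring_1 set \<Rightarrow> 'b \<Rightarrow> bool" where
  "unit_in S u \<longleftrightarrow> u \<in> S \<and> (\<exists>v\<in>S. u * v = 1)"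

definition irreducible_in :: "'b::comm_ring_1 set \<Rightarrow> 'b \<Rightarrow> bool" where
  "irreducible_in S f \<longleftrightarrow> f \<in> S \<and> f \<noteq> 0 \<and> \<not> unit_in S f \<and>
     (\<forall>a\<in>S. \<forall>b\<in>S. f = a * b \<longrightarrow> unit_in S a \<or> unit_in S b)"

definition is_gcd_of :: "'a::comm_ring_1 set \<Rightarrow> 'a \<Rightarrow> bool" where
  "is_gcd_of A d \<longleftrightarrow> (\<forall>a\<in>A. d dvd a) \<and> (\<forall>c. (\<forall>a\<in>A. c dvd a) \<longrightarrow> c dvd d)"

definition gcd_domain :: "'a::idom itself \<Rightarrow> bool" where
  "gcd_domain _ \<longleftrightarrow> (\<forall>a b::'a. \<exists>d. is_gcd_of {a, b} d)"

definition content :: "(rat \<Rightarrow>\<^sub>0 'a::comm_ring_1) \<Rightarrow> 'a set" where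
  "content f = {d. is_gcd_of (Poly_Mapping.lookup f ` Poly_Mapping.keys f) d}"

definition primitive :: "(rat \<Rightarrow>\<^sub>0 'a::comm_ring_1) \<Rightarrow> bool" where
  "primitive f \<longleftrightarrow> f \<noteq> 0 \<and> (\<forall>d\<in>content f. d dvd 1)"

definition to_frac_ring :: "(rat \<Rightarrow>\<^sub>0 'a::idom) \<Rightarrow> (rat \<Rightarrow>\<^sub>0 'a fract)" where
  "to_frac_ring f = Poly_Mapping.map (\<lambda>a. Fract a 1) f"

end

theory Submission
  imports Defs
begin

abbreviation lk where "lk \<equiv> Poly_Mapping.lookup"
abbreviation ks where "ks \<equiv> Poly_Mapping.keys"

lemma lookup_map_gen: "f 0 = 0 \<Longrightarrow> Poly_Mapping.lookup (Poly_Mapping.map f p) k = f (Poly_Mapping.lookup p k)"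
  by transfer (simp add: when_def)

lemma lookup_mult_rat:
  fixes f g :: "rat \<Rightarrow>\<^sub>0 'b::comm_semiring_1"
  shows "Poly_Mapping.lookup (f * g) k = (\<Sum>l\<in>Poly_Mapping.keys f. Poly_Mapping.lookup f l * Poly_Mapping.lookup g (k - l))"
proof -
  have 1: "Sum_any (\<lambda>q::rat. Poly_Mapping.lookup g q when k = (l::rat) + q) = Poly_Mapping.lookup g (k - l)" for l
  proof -
    have "(\<lambda>q::rat. Poly_Mapping.lookup g q when k = (l::rat) + q) = (\<lambda>q. if q = k - l then Poly_Mapping.lookup g q else 0)"
      by (auto simp: when_def fun_eq_iff)
    then show ?thesis by (simp only: Sum_any.delta)
  qed
  have "Poly_Mapping.lookup (f * g) k = Sum_any (\<lambda>l. Poly_Mapping.lookup f l * Poly_Mapping.lookup g (k - l))"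
    by (simp add: lookup_mult 1)
  also have "\<dots> = (\<Sum>l\<in>Poly_Mapping.keys f. Poly_Mapping.lookup f l * Poly_Mapping.lookup g (k - l))"
    by (rule Sum_any.expand_superset) (auto simp: in_keys_iff)
  finally show ?thesis .
qed


lemma lc_mult:
  fixes f g :: "rat \<Rightarrow>\<^sub>0 'b::idom"
  assumes "f \<noteq> 0" "g \<noteq> 0"
  shows "lk (f*g) (Max (ks f) + Max (ks g)) = lk f (Max (ks f)) * lk g (Max (ks g))"
proof -
  let ?F = "Max (ks f)" and ?G = "Max (ks g)"
  have fin: "finite (ks f)" "finite (ks g)" by auto
  have ne: "ks f \<noteq> {}" "ks g \<noteq> {}" using assms by auto
  have inF: "?F \<in> ks f" using fin ne by simp
  have "lk (f*g) (?F + ?G) = (\<Sum>l\<in>ks f. lk f l * lk g (?F + ?G - l))"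
    by (rule lookup_mult_rat)
  also have "\<dots> = lk f ?F * lk g (?F + ?G - ?F) + (\<Sum>l\<in>ks f - {?F}. lk f l * lk g (?F + ?G - l))"
    using inF fin by (simp add: sum.remove)
  also have "(\<Sum>l\<in>ks f - {?F}. lk f l * lk g (?F + ?G - l)) = 0"
  proof (rule sum.neutral, rule ballI)
    fix l assume l: "l \<in> ks f - {?F}"
    then have "l < ?F" using fin by (simp add: Max_ge le_neq_trans)
    then have "?F + ?G - l > ?G" by simp
    then have "?F + ?G - l \<notin> ks g" using fin Max_ge not_le by blast
    then show "lk f l * lk g (?F + ?G - l) = 0" by (simp add: in_keys_iff)
  qed
  finally show ?thesis by simp
qed

lemma max_mult_in_keys:
  fixes f g :: "rat \<Rightarrow>\<^sub>0 'b::idom"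
  assumes "f \<noteq> 0" "g \<noteq> 0"
  shows "Max (ks f) + Max (ks g) \<in> ks (f*g)"
proof -
  have fin: "finite (ks f)" "finite (ks g)" by auto
  have ne: "ks f \<noteq> {}" "ks g \<noteq> {}" using assms by auto
  have "lk f (Max (ks f)) \<noteq> 0" "lk g (Max (ks g)) \<noteq> 0" using fin ne by (auto simp: in_keys_iff[symmetric])
  then show ?thesis using lc_mult[OF assms] by (simp add: in_keys_iff)
qed

lemma const_factor:
  fixes f g :: "rat \<Rightarrow>\<^sub>0 'b::idom"
  assumes "ks f \<subseteq> {q. 0 \<le> q}" "ks g \<subseteq> {q. 0 \<le> q}" "f \<noteq> 0" "g \<noteq> 0" "ks (f*g) \<subseteq> {0}"
  shows "ks f \<subseteq> {0}"
proof -
  have fin: "finite (ks f)" "finite (ks g)" by auto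
  have ne: "ks f \<noteq> {}" "ks g \<noteq> {}" using assms by auto
  have "Max (ks f) + Max (ks g) = 0" using max_mult_in_keys[OF assms(3,4)] assms(5) by auto
  moreover have "Max (ks f) \<ge> 0" "Max (ks g) \<ge> 0" using assms(1,2) fin ne Max_in by blast+
  ultimately have "Max (ks f) = 0" by linarith
  then show ?thesis
  proof (intro subsetI)
    fix x assume "x \<in> ks f" "Max (ks f) = 0"
    then have "x \<le> 0" "x \<ge> 0" using fin Max_ge[of "ks f" x] assms(1) by auto
    then show "x \<in> {0}" by simp
  qed
qed

lemma const_single: "ks f \<subseteq> {0} \<Longrightarrow> f = Poly_Mapping.single 0 (lk f 0)"
  by (rule poly_mapping_eqI) (auto simp: lookup_single when_def in_keys_iff)

lemma lookup_single_mult: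
  fixes h :: "rat \<Rightarrow>\<^sub>0 'b::comm_semiring_1"
  shows "lk (Poly_Mapping.single n a * h) k = a * lk h (k - n)"
  by (simp add: lookup_mult_rat)

lemma lookup_const_mult:
  fixes h :: "rat \<Rightarrow>\<^sub>0 'b::comm_semiring_1"
  shows "lk (Poly_Mapping.single 0 a * h) k = a * lk h k"
  by (simp add: lookup_single_mult)

lemma keys_const_mult:
  fixes h :: "rat \<Rightarrow>\<^sub>0 'b::comm_semiring_1"
  shows "ks (Poly_Mapping.single 0 a * h) \<subseteq> ks h"
  by (auto simp: in_keys_iff lookup_const_mult)

lemma unit_const:
  fixes u :: "rat \<Rightarrow>\<^sub>0 'b::idom"
  assumes "M \<subseteq> {q. 0 \<le> q}" "unit_in (semigroup_ring M) u"
  shows "ks u \<subseteq> {0}"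
proof -
  obtain v where v: "v \<in> semigroup_ring M" "u * v = 1" "u \<in> semigroup_ring M"
    using assms(2) unfolding unit_in_def by blast
  have "u \<noteq> 0" "v \<noteq> 0" using v by auto
  then show ?thesis using const_factor[of u v] v assms(1) by (auto simp: semigroup_ring_def)
qed


lemma Fract_eq0: "Fract (a::'a::idom) 1 = 0 \<longleftrightarrow> a = 0"
  by (simp add: Zero_fract_def eq_fract)

lemma Fract_inj: "Fract (a::'a::idom) 1 = Fract b 1 \<longleftrightarrow> a = b"
  by (simp add: eq_fract)

lemma Fract_add: "Fract (a + b) (1::'a::idom) = Fract a 1 + Fract b 1"
  by simp

lemma Fract_sum: "Fract (sum h A) (1::'a::idom) = (\<Sum>x\<in>A. Fract (h x) 1)"
  by (induction A rule: infinite_finite_induct) (simp_all add: Zero_fract_def Fract_add del: add_fract)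

lemma lookup_to_frac: "lk (to_frac_ring f) k = Fract (lk f k) 1"
  unfolding to_frac_ring_def by (simp add: lookup_map_gen Zero_fract_def)

lemma keys_to_frac: "ks (to_frac_ring f) = ks f"
  by (auto simp: in_keys_iff lookup_to_frac Fract_eq0)

lemma to_frac_mult: "to_frac_ring (f * g) = to_frac_ring (f::rat \<Rightarrow>\<^sub>0 'a::idom) * to_frac_ring g"
  by (rule poly_mapping_eqI) (simp add: lookup_to_frac lookup_mult_rat keys_to_frac Fract_sum)

lemma to_frac_inj: "to_frac_ring f = to_frac_ring g \<Longrightarrow> f = g"
  by (rule poly_mapping_eqI) (metis lookup_to_frac Fract_inj)

lemma to_frac_const_mult: "to_frac_ring (Poly_Mapping.single 0 c * f) = Poly_Mapping.single 0 (Fract c 1) * to_frac_ring (f::rat \<Rightarrow>\<^sub>0 'a::idom)"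
  by (rule poly_mapping_eqI) (simp add: lookup_to_frac lookup_const_mult)

lemma clear_denoms:
  fixes A :: "rat \<Rightarrow>\<^sub>0 'a::idom fract"
  shows "\<exists>r a'. r \<noteq> 0 \<and> ks a' = ks A \<and> to_frac_ring a' = Poly_Mapping.single 0 (Fract r 1) * A"
proof -
  have "\<forall>k. \<exists>n d. d \<noteq> 0 \<and> lk A k = Fract n d" by (metis Fract_cases)
  then obtain n d where nd: "\<And>k. d k \<noteq> 0 \<and> lk A k = Fract (n k) (d k)" by metis
  define r where "r = (\<Prod>k\<in>ks A. d k)"
  have r0: "r \<noteq> 0" unfolding r_def using nd by simp
  have ex: "\<exists>y. Fract y 1 = Fract r 1 * lk A k" for k
  proof (cases "k \<in> ks A")
    case True
    have "r = d k * (\<Prod>j\<in>ks A - {k}. d j)" unfolding r_def using True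
      by (simp add: prod.remove)
    then have "Fract r 1 * lk A k = Fract (n k * (\<Prod>j\<in>ks A - {k}. d j)) 1"
      using nd[of k] by (simp add: eq_fract algebra_simps)
    then show ?thesis by metis
  next
    case False then show ?thesis by (auto simp: in_keys_iff Zero_fract_def)
  qed
  define h where "h x = (SOME y. Fract y 1 = Fract r 1 * x)" for x
  have h: "Fract (h (lk A k)) 1 = Fract r 1 * lk A k" for k
    unfolding h_def using someI_ex[OF ex[of k]] .
  have h0: "h 0 = 0"
  proof -
    have "Fract (h 0) 1 = 0" unfolding h_def by (rule someI2[of _ 0]) (auto simp: Zero_fract_def)
    then show ?thesis by (simp add: Fract_eq0)
  qed
  define a' where "a' = Poly_Mapping.map h A"
  have la: "lk a' k = h (lk A k)" for k unfolding a'_def by (simp add: lookup_map_gen h0)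
  have "to_frac_ring a' = Poly_Mapping.single 0 (Fract r 1) * A"
    by (rule poly_mapping_eqI) (simp add: lookup_to_frac la h lookup_const_mult)
  moreover have "ks a' = ks A"
  proof -
    have "lk a' k = 0 \<longleftrightarrow> lk A k = 0" for k
    proof -
      have "lk a' k = 0 \<longleftrightarrow> Fract (h (lk A k)) 1 = 0" by (simp only: la Fract_eq0)
      also have "\<dots> \<longleftrightarrow> Fract r 1 * lk A k = 0" by (simp only: h)
      also have "\<dots> \<longleftrightarrow> lk A k = 0" using r0 Fract_eq0[of r] by simp
      finally show ?thesis .
    qed
    then show ?thesis by (intro set_eqI) (metis in_keys_iff)
  qed
  ultimately show ?thesis using r0 by blast
qed


definition cdvd :: "'a::comm_ring_1 \<Rightarrow> (rat \<Rightarrow>\<^sub>0 'a) \<Rightarrow> bool" where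
  "cdvd d f \<longleftrightarrow> (\<forall>k. d dvd lk f k)"

definition prim :: "(rat \<Rightarrow>\<^sub>0 'a::comm_ring_1) \<Rightarrow> bool" where
  "prim f \<longleftrightarrow> (\<forall>d. cdvd d f \<longrightarrow> d dvd 1)"

lemma prim_nonzero: "prim (f::rat \<Rightarrow>\<^sub>0 'a::idom) \<Longrightarrow> f \<noteq> 0"
proof
  assume "prim f" "f = 0"
  then have "(0::'a) dvd 1" unfolding prim_def cdvd_def by simp
  then show False by simp
qed

lemma unit_dvd_cancel: "(g::'a::comm_semiring_1) dvd 1 \<Longrightarrow> e dvd y * g \<Longrightarrow> e dvd y"
proof -
  assume "g dvd 1" "e dvd y * g"
  then obtain w where "1 = g * w" by (auto simp: dvd_def)
  then have yy: "y * g * w = y" by (simp add: mult.assoc)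
  have "e dvd y * g * w" using \<open>e dvd y * g\<close> by (rule dvd_mult2)
  then show ?thesis by (simp only: yy)
qed

lemma fin_gcd:
  assumes G: "gcd_domain TYPE('a::idom)" and "finite A"
  shows "\<exists>d::'a. is_gcd_of A d"
  using assms(2)
proof (induction A rule: finite_induct)
  case empty then show ?case by (auto simp: is_gcd_of_def)
next
  case (insert a A)
  then obtain d where d: "is_gcd_of A d" by blast
  obtain e where e: "is_gcd_of {a, d} e" using G unfolding gcd_domain_def by blast
  have "is_gcd_of (insert a A) e"
    unfolding is_gcd_of_def
  proof (intro conjI allI impI ballI)
    fix x assume "x \<in> insert a A"
    then show "e dvd x"
    proof
      assume "x = a" then show ?thesis using e by (simp add: is_gcd_of_def)
    next
      assume "x \<in> A" then have "d dvd x" using d by (simp add: is_gcd_of_def)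
      moreover have "e dvd d" using e by (simp add: is_gcd_of_def)
      ultimately show ?thesis by (rule dvd_trans[rotated])
    qed
  next
    fix c assume c: "\<forall>x\<in>insert a A. c dvd x"
    then have "c dvd d" using d by (simp add: is_gcd_of_def)
    moreover have "c dvd a" using c by simp
    ultimately show "c dvd e" using e by (simp add: is_gcd_of_def)
  qed
  then show ?case by blast
qed

lemma gcd_mult:
  assumes G: "gcd_domain TYPE('a::idom)" and fin: "finite A" and d: "is_gcd_of A (d::'a)"
  shows "is_gcd_of ((*) c ` A) (c*d)"
proof (cases "c = 0")
  case True then show ?thesis by (auto simp: is_gcd_of_def)
next
  case c: False
  obtain g where g: "is_gcd_of ((*) c ` A) g" using fin_gcd[OF G] fin by blast
  have 1: "c*d dvd g" using g d unfolding is_gcd_of_def by auto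
  have "c dvd g" using g unfolding is_gcd_of_def by auto
  then obtain g' where g': "g = c * g'" by (auto simp: dvd_def)
  have "g' dvd a" if "a \<in> A" for a
  proof -
    have "g dvd c * a" using g that unfolding is_gcd_of_def by auto
    then show ?thesis using g' c by simp
  qed
  then have "g' dvd d" using d unfolding is_gcd_of_def by auto
  then have 2: "g dvd c * d" using g' by simp
  show ?thesis unfolding is_gcd_of_def
  proof (intro conjI allI impI)
    show "\<forall>a\<in>(*) c ` A. c * d dvd a" using d unfolding is_gcd_of_def by auto
    fix x assume "\<forall>a\<in>(*) c ` A. x dvd a"
    then have "x dvd g" using g unfolding is_gcd_of_def by auto
    then show "x dvd c * d" using 2 dvd_trans by blast
  qed
qed

lemma coprime_dvd:
  assumes G: "gcd_domain TYPE('a::idom)"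
    and cop: "\<forall>x. x dvd e \<longrightarrow> x dvd c \<longrightarrow> x dvd 1" and dv: "(e::'a) dvd c * y"
  shows "e dvd y"
proof -
  obtain g where g: "is_gcd_of {e, c} g" using G unfolding gcd_domain_def by blast
  have gu: "g dvd 1" using g cop unfolding is_gcd_of_def by auto
  have "is_gcd_of ((*) y ` {e, c}) (y * g)" by (rule gcd_mult[OF G _ g]) simp
  moreover have "\<forall>a\<in>(*) y ` {e, c}. e dvd a" using dv by (auto simp: mult.commute)
  ultimately have "e dvd y * g" unfolding is_gcd_of_def by blast
  then show ?thesis using gu unit_dvd_cancel by blast
qed

lemma divide_const:
  fixes f :: "rat \<Rightarrow>\<^sub>0 'a::idom"
  assumes "c \<noteq> 0" "cdvd c f"
  shows "\<exists>g. f = Poly_Mapping.single 0 c * g \<and> ks g = ks f"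
proof -
  define h where "h x = (SOME y. x = c * y)" for x
  have h: "lk f k = c * h (lk f k)" for k
  proof -
    have "\<exists>y. lk f k = c * y" using assms(2) unfolding cdvd_def dvd_def by blast
    then show ?thesis unfolding h_def by (rule someI_ex)
  qed
  have h0: "h 0 = 0"
  proof -
    have "0 = c * h 0" unfolding h_def by (rule someI2[of _ 0]) auto
    then show ?thesis using assms(1) by simp
  qed
  define g where "g = Poly_Mapping.map h f"
  have lg: "lk g k = h (lk f k)" for k unfolding g_def by (simp add: lookup_map_gen h0)
  have "f = Poly_Mapping.single 0 c * g"
  proof (rule poly_mapping_eqI)
    fix k show "lk f k = lk (Poly_Mapping.single 0 c * g) k"
      unfolding lookup_const_mult lg by (rule h)
  qed
  moreover have "ks g = ks f"
  proof -
    have "lk g k = 0 \<longleftrightarrow> lk f k = 0" for k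
    proof -
      have "lk f k = c * lk g k" using h[of k] by (simp only: lg)
      then show ?thesis using assms(1) by simp
    qed
    then show ?thesis by (intro set_eqI) (metis in_keys_iff)
  qed
  ultimately show ?thesis by blast
qed

lemma coeffs_gcd_dvd:
  assumes "is_gcd_of (lk f ` ks f) d"
  shows "cdvd d f"
  unfolding cdvd_def
proof
  fix k show "d dvd lk f k"
  proof (cases "k \<in> ks f")
    case True then show ?thesis using assms unfolding is_gcd_of_def by blast
  next
    case False then show ?thesis by (simp add: in_keys_iff)
  qed
qed

lemma decomp:
  fixes f :: "rat \<Rightarrow>\<^sub>0 'a::idom"
  assumes G: "gcd_domain TYPE('a)" and f0: "f \<noteq> 0"
  shows "\<exists>c g. c \<noteq> 0 \<and> f = Poly_Mapping.single 0 c * g \<and> prim g \<and> ks g = ks f"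
proof -
  obtain d where d: "is_gcd_of (lk f ` ks f) d" using fin_gcd[OF G finite_imageI[OF finite_keys]] by blast
  have cd: "cdvd d f" using coeffs_gcd_dvd[OF d] .
  have d0: "d \<noteq> 0"
  proof
    assume "d = 0"
    then have "\<forall>k. lk f k = 0" using cd unfolding cdvd_def by simp
    then have "f = 0" by (intro poly_mapping_eqI) simp
    then show False using f0 by simp
  qed
  obtain g where g: "f = Poly_Mapping.single 0 d * g" "ks g = ks f" using divide_const[OF d0 cd] by blast
  have "prim g" unfolding prim_def
  proof (intro allI impI)
    fix e assume "cdvd e g"
    then have "\<forall>a\<in>lk f ` ks f. d * e dvd a" unfolding cdvd_def using g(1)
      by (auto simp: lookup_const_mult)
    then have "d * e dvd d" using d unfolding is_gcd_of_def by blast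
    then show "e dvd 1" using d0 dvd_mult_cancel_left[of d e 1] by simp
  qed
  then show ?thesis using d0 g by blast
qed

lemma prim_iff:
  fixes f :: "rat \<Rightarrow>\<^sub>0 'a::idom"
  assumes G: "gcd_domain TYPE('a)"
  shows "prim f \<longleftrightarrow> primitive f"
proof
  assume p: "prim f"
  have "d dvd 1" if "is_gcd_of (lk f ` ks f) d" for d
    using p coeffs_gcd_dvd[OF that] unfolding prim_def by blast
  then show "primitive f" unfolding primitive_def content_def
    using prim_nonzero[OF p] by blast
next
  assume p: "primitive f"
  obtain d where d: "is_gcd_of (lk f ` ks f) d" using fin_gcd[OF G finite_imageI[OF finite_keys]] by blast
  have du: "d dvd 1" using p d unfolding primitive_def content_def by blast
  show "prim f" unfolding prim_def
  proof (intro allI impI)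
    fix e assume "cdvd e f"
    then have "e dvd d" using d unfolding is_gcd_of_def cdvd_def by blast
    then show "e dvd 1" using du by (rule dvd_trans)
  qed
qed

lemma cdvd_content:
  fixes p :: "rat \<Rightarrow>\<^sub>0 'a::idom"
  assumes G: "gcd_domain TYPE('a)" and "prim p" and "cdvd d (Poly_Mapping.single 0 c * p)"
  shows "d dvd c"
proof -
  obtain t where t: "is_gcd_of (lk p ` ks p) t" using fin_gcd[OF G finite_imageI[OF finite_keys]] by blast
  have tu: "t dvd 1" using assms(2) coeffs_gcd_dvd[OF t] unfolding prim_def by blast
  have "is_gcd_of ((*) c ` (lk p ` ks p)) (c * t)" by (rule gcd_mult[OF G _ t]) simp
  moreover have "\<forall>a\<in>(*) c ` (lk p ` ks p). d dvd a"
    using assms(3) unfolding cdvd_def by (auto simp: lookup_const_mult)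
  ultimately have "d dvd c * t" unfolding is_gcd_of_def by blast
  then show ?thesis using tu unit_dvd_cancel by blast
qed


lemma gauss_step:
  fixes g h :: "rat \<Rightarrow>\<^sub>0 'a::idom"
  assumes G: "gcd_domain TYPE('a)"
    and IH: "\<And>g' h' :: rat \<Rightarrow>\<^sub>0 'a. card (ks g') + card (ks h') < card (ks g) + card (ks h) \<Longrightarrow> prim g' \<Longrightarrow> prim h' \<Longrightarrow> prim (g' * h')"
    and pg: "prim g" and ph: "prim h" and cx: "cdvd x (g * h)" and xa: "x dvd lk g (Max (ks g))"
  shows "x dvd 1"
proof -
  define n where "n = Max (ks g)"
  define a where "a = lk g n"
  define g1 where "g1 = g - Poly_Mapping.single n a"
  have g0: "g \<noteq> 0" using prim_nonzero[OF pg] .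
  have nin: "n \<in> ks g" unfolding n_def using g0 by simp
  have lg1: "lk g1 k = (if k = n then 0 else lk g k)" for k
    unfolding g1_def a_def by (simp add: lookup_minus lookup_single when_def)
  have lg: "lk g k = (if k = n then a else lk g1 k)" for k
    using lg1[of k] unfolding a_def by simp
  have kg1: "ks g1 = ks g - {n}"
    by (auto simp: in_keys_iff lg1 split: if_splits)
  have xa': "x dvd a" using xa unfolding a_def n_def .
  have cx1: "cdvd x (g1 * h)" unfolding cdvd_def
  proof
    fix k
    have "g1 * h = g * h - Poly_Mapping.single n a * h" unfolding g1_def by (simp add: algebra_simps)
    then have "lk (g1 * h) k = lk (g * h) k - a * lk h (k - n)"
      by (simp add: lookup_minus lookup_single_mult)
    moreover have "x dvd lk (g * h) k" using cx unfolding cdvd_def by blast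
    moreover have "x dvd a * lk h (k - n)" using xa' by simp
    ultimately show "x dvd lk (g1 * h) k" by simp
  qed
  show ?thesis
  proof (cases "g1 = 0")
    case True
    have "cdvd a g" unfolding cdvd_def using lg True by simp
    then have au: "a dvd 1" using pg unfolding prim_def by blast
    have gs: "g = Poly_Mapping.single n a" unfolding g1_def using True by (simp add: g1_def)
    have "cdvd x h" unfolding cdvd_def
    proof
      fix k
      have "x dvd lk (g * h) (k + n)" using cx unfolding cdvd_def by blast
      moreover have "lk (g * h) (k + n) = lk h k * a"
        by (simp only: gs lookup_single_mult) (simp add: mult.commute)
      ultimately have "x dvd lk h k * a" by simp
      then show "x dvd lk h k" using au unit_dvd_cancel by blast
    qed
    then show ?thesis using ph unfolding prim_def by blast
  next
    case False
    obtain c1 g1' where d: "c1 \<noteq> 0" "g1 = Poly_Mapping.single 0 c1 * g1'" "prim g1'" "ks g1' = ks g1"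
      using decomp[OF G False] by blast
    have "card (ks g1') < card (ks g)"
      using d(4) kg1 nin card_Diff1_less[OF finite_keys nin] by simp
    then have p: "prim (g1' * h)" using IH d(3) ph by simp
    have cop: "\<forall>y. y dvd x \<longrightarrow> y dvd c1 \<longrightarrow> y dvd 1"
    proof (intro allI impI)
      fix y assume y: "y dvd x" "y dvd c1"
      have "cdvd y g" unfolding cdvd_def
      proof
        fix k
        have "y dvd a" using y(1) xa' by (rule dvd_trans)
        moreover have "y dvd lk g1 k" using y(2) d(2) by (simp add: lookup_const_mult)
        ultimately show "y dvd lk g k" using lg[of k] by simp
      qed
      then show "y dvd 1" using pg unfolding prim_def by blast
    qed
    have "cdvd x (g1' * h)" unfolding cdvd_def
    proof
      fix k
      have "lk (g1 * h) k = c1 * lk (g1' * h) k"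
        using d(2) by (simp add: mult.assoc lookup_const_mult)
      then have "x dvd c1 * lk (g1' * h) k" using cx1 unfolding cdvd_def by metis
      then show "x dvd lk (g1' * h) k" using coprime_dvd[OF G cop] by blast
    qed
    then show ?thesis using p unfolding prim_def by blast
  qed
qed

lemma gauss:
  fixes g h :: "rat \<Rightarrow>\<^sub>0 'a::idom"
  assumes G: "gcd_domain TYPE('a)"
  shows "prim g \<Longrightarrow> prim h \<Longrightarrow> prim (g * h)"
proof (induction "card (ks g) + card (ks h)" arbitrary: g h rule: less_induct)
  case less
  show ?case unfolding prim_def
  proof (intro allI impI)
    fix d assume cd: "cdvd d (g * h)"
    define a where "a = lk g (Max (ks g))"
    define b where "b = lk h (Max (ks h))"
    have IH: "\<And>g' h' :: rat \<Rightarrow>\<^sub>0 'a. card (ks g') + card (ks h') < card (ks g) + card (ks h) \<Longrightarrow> prim g' \<Longrightarrow> prim h' \<Longrightarrow> prim (g' * h')"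
      by (rule less.hyps)
    have cop: "\<forall>y. y dvd d \<longrightarrow> y dvd a \<longrightarrow> y dvd 1"
    proof (intro allI impI)
      fix y assume y: "y dvd d" "y dvd a"
      have "cdvd y (g * h)" using cd y(1) unfolding cdvd_def using dvd_trans by blast
      then show "y dvd 1" using gauss_step[OF G IH less.prems(1,2)] y(2) unfolding a_def by blast
    qed
    have "lk (g * h) (Max (ks g) + Max (ks h)) = a * b"
      unfolding a_def b_def by (rule lc_mult) (use prim_nonzero less.prems in auto)
    then have "d dvd a * b" using cd unfolding cdvd_def by metis
    then have db: "d dvd b" using coprime_dvd[OF G cop] by blast
    have IH': "\<And>g' h' :: rat \<Rightarrow>\<^sub>0 'a. card (ks g') + card (ks h') < card (ks h) + card (ks g) \<Longrightarrow> prim g' \<Longrightarrow> prim h' \<Longrightarrow> prim (g' * h')"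
      using IH by (simp add: add.commute)
    have "cdvd d (h * g)" using cd by (simp add: mult.commute)
    then show "d dvd 1" using gauss_step[OF G IH' less.prems(2,1)] db unfolding b_def by blast
  qed
qed


lemma single0_in: "0 \<in> M \<Longrightarrow> Poly_Mapping.single 0 c \<in> semigroup_ring M"
  by (auto simp: semigroup_ring_def)

lemma single_nz: "c \<noteq> 0 \<Longrightarrow> Poly_Mapping.single k c \<noteq> 0"
proof
  assume "c \<noteq> 0" "Poly_Mapping.single k c = 0"
  then have "lk (Poly_Mapping.single k c) k = lk 0 k" by simp
  then show False using \<open>c \<noteq> 0\<close> by simp
qed

lemma single0_mult: "Poly_Mapping.single 0 (x * y) = Poly_Mapping.single 0 x * (Poly_Mapping.single 0 (y::'b::comm_semiring_1) :: rat \<Rightarrow>\<^sub>0 'b)"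
  by (simp add: mult_single)

lemma unit_single:
  fixes c :: "'b::comm_ring_1"
  assumes "0 \<in> M" "c * w = 1"
  shows "unit_in (semigroup_ring M) (Poly_Mapping.single 0 c :: rat \<Rightarrow>\<^sub>0 'b)"
  unfolding unit_in_def
proof (intro conjI bexI)
  show "Poly_Mapping.single 0 c \<in> semigroup_ring M" using assms single0_in by blast
  show "Poly_Mapping.single 0 w \<in> semigroup_ring M" using assms single0_in by blast
  show "Poly_Mapping.single 0 c * Poly_Mapping.single 0 w = (1 :: rat \<Rightarrow>\<^sub>0 'b)"
    using assms(2) by (simp add: mult_single)
qed

lemma back_aux:
  fixes f a b :: "rat \<Rightarrow>\<^sub>0 'a::idom"
  assumes Mn: "M \<subseteq> {q. 0 \<le> q}" "0 \<in> M" and p: "prim f" and fab: "f = a * b"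
    and u: "unit_in (semigroup_ring M) (to_frac_ring a)"
  shows "unit_in (semigroup_ring M) a"
proof -
  have "ks a \<subseteq> {0}" using unit_const[OF Mn(1) u] by (simp add: keys_to_frac)
  then have as: "a = Poly_Mapping.single 0 (lk a 0)" by (rule const_single)
  have "cdvd (lk a 0) f" unfolding cdvd_def
  proof
    fix k have "lk f k = lk a 0 * lk b k" using fab as by (metis lookup_const_mult)
    then show "lk a 0 dvd lk f k" by simp
  qed
  then have "lk a 0 dvd 1" using p unfolding prim_def by blast
  then obtain w where "lk a 0 * w = 1" by (metis dvd_def)
  then show ?thesis using unit_single[OF Mn(2)] as by metis
qed

lemma const_unit_T:
  fixes A :: "rat \<Rightarrow>\<^sub>0 'b::field"
  assumes "0 \<in> M" "A \<in> semigroup_ring M" "A \<noteq> 0" "ks A \<subseteq> {0}"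
  shows "unit_in (semigroup_ring M) A"
proof -
  have as: "A = Poly_Mapping.single 0 (lk A 0)" using assms(4) by (rule const_single)
  then have "lk A 0 \<noteq> 0" using assms(3) by (metis single_zero)
  then have "lk A 0 * inverse (lk A 0) = 1" by simp
  then show ?thesis using unit_single[OF assms(1)] as by metis
qed


theorem mainTheorem2:
  fixes M :: "rat set" and f :: "rat \<Rightarrow>\<^sub>0 'a::idom"
  assumes "puiseux_monoid M"
    and "gcd_domain TYPE('a)"
    and "f \<in> semigroup_ring M"
    and "\<not> Poly_Mapping.keys f \<subseteq> {0}"
  shows "irreducible_in (semigroup_ring M) f \<longleftrightarrow>
           primitive f \<and> irreducible_in (semigroup_ring M :: (rat \<Rightarrow>\<^sub>0 'a fract) set) (to_frac_ring f)"
proof -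
  note G = assms(2)
  have Mn: "M \<subseteq> {q. 0 \<le> q}" and M0: "0 \<in> M" using assms(1) unfolding puiseux_monoid_def by auto
  have fS: "f \<in> semigroup_ring M" by fact
  have nc: "\<not> ks f \<subseteq> {0}" by fact
  have f0: "f \<noteq> 0" using nc by auto
  let ?S = "semigroup_ring M :: (rat \<Rightarrow>\<^sub>0 'a) set"
  let ?T = "semigroup_ring M :: (rat \<Rightarrow>\<^sub>0 'a fract) set"
  let ?F = "to_frac_ring f"
  have FT: "?F \<in> ?T" using fS by (simp add: semigroup_ring_def keys_to_frac)
  have F0: "?F \<noteq> 0" using nc by (metis keys_to_frac keys_zero empty_subsetI)
  have Fnu: "\<not> unit_in ?T ?F"
  proof
    assume "unit_in ?T ?F"
    then have "ks ?F \<subseteq> {0}" by (rule unit_const[OF Mn])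
    then show False using nc by (simp add: keys_to_frac)
  qed
  show ?thesis
  proof
    assume irr: "irreducible_in ?S f"
    have pf: "prim f" unfolding prim_def
    proof (intro allI impI)
      fix d assume cd: "cdvd d f"
      have d0: "d \<noteq> 0"
      proof
        assume "d = 0"
        then have "f = 0" using cd unfolding cdvd_def by (intro poly_mapping_eqI) simp
        then show False using f0 by simp
      qed
      obtain g where g: "f = Poly_Mapping.single 0 d * g" "ks g = ks f"
        using divide_const[OF d0 cd] by blast
      have gS: "g \<in> ?S" using g(2) fS by (simp add: semigroup_ring_def)
      have "unit_in ?S (Poly_Mapping.single 0 d) \<or> unit_in ?S g"
        using irr single0_in[OF M0] gS g(1) unfolding irreducible_in_def by blast
      moreover have "\<not> unit_in ?S g"
      proof
        assume "unit_in ?S g"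
        then have "ks g \<subseteq> {0}" by (rule unit_const[OF Mn])
        then show False using nc g(2) by simp
      qed
      ultimately have "unit_in ?S (Poly_Mapping.single 0 d)" by blast
      then obtain v where "Poly_Mapping.single (0::rat) d * v = 1" unfolding unit_in_def by blast
      then have "lk (Poly_Mapping.single (0::rat) d * v) 0 = 1" by simp
      then have "d * lk v 0 = 1" by (simp add: lookup_const_mult)
      then show "d dvd 1" by (metis dvd_triv_left)
    qed
    have "irreducible_in ?T ?F"
      unfolding irreducible_in_def
    proof (intro conjI ballI impI FT F0 Fnu)
      fix A B assume AT: "A \<in> ?T" and BT: "B \<in> ?T" and FAB: "?F = A * B"
      show "unit_in ?T A \<or> unit_in ?T B"
      proof (rule ccontr)
        assume nu: "\<not> (unit_in ?T A \<or> unit_in ?T B)"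
        have A0: "A \<noteq> 0" and B0: "B \<noteq> 0" using F0 FAB by auto
        have Anc: "\<not> ks A \<subseteq> {0}" using const_unit_T[OF M0 AT A0] nu by blast
        have Bnc: "\<not> ks B \<subseteq> {0}" using const_unit_T[OF M0 BT B0] nu by blast
        obtain r a' where ra: "r \<noteq> 0" "ks a' = ks A" "to_frac_ring a' = Poly_Mapping.single 0 (Fract r 1) * A"
          using clear_denoms by blast
        obtain s b' where sb: "s \<noteq> 0" "ks b' = ks B" "to_frac_ring b' = Poly_Mapping.single 0 (Fract s 1) * B"
          using clear_denoms by blast
        have "to_frac_ring (Poly_Mapping.single 0 (r*s) * f) = Poly_Mapping.single 0 (Fract (r*s) 1) * (A * B)"
          by (simp only: to_frac_const_mult FAB)
        also have "\<dots> = (Poly_Mapping.single 0 (Fract r 1) * A) * (Poly_Mapping.single 0 (Fract s 1) * B)"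
        proof -
          have "Fract (r*s) 1 = Fract r 1 * Fract s 1" by simp
          then show ?thesis by (simp add: single0_mult mult_ac del: mult_fract)
        qed
        also have "\<dots> = to_frac_ring (a' * b')" by (simp only: to_frac_mult ra(3) sb(3))
        finally have eq: "Poly_Mapping.single 0 (r*s) * f = a' * b'" by (rule to_frac_inj)
        have a0: "a' \<noteq> 0" using ra(2) A0 by (metis keys_eq_empty)
        have b0: "b' \<noteq> 0" using sb(2) B0 by (metis keys_eq_empty)
        obtain c1 a'' where da: "c1 \<noteq> 0" "a' = Poly_Mapping.single 0 c1 * a''" "prim a''" "ks a'' = ks a'"
          using decomp[OF G a0] by blast
        obtain c2 b'' where db: "c2 \<noteq> 0" "b' = Poly_Mapping.single 0 c2 * b''" "prim b''" "ks b'' = ks b'"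
          using decomp[OF G b0] by blast
        define p where "p = a'' * b''"
        have pp: "prim p" unfolding p_def using gauss[OF G da(3) db(3)] .
        have ab: "a' * b' = Poly_Mapping.single 0 (c1 * c2) * p"
          unfolding p_def da(2) db(2) by (simp add: single0_mult mult_ac)
        have "cdvd (r*s) (Poly_Mapping.single 0 (c1 * c2) * p)"
          unfolding cdvd_def
        proof
          fix k
          have "lk (Poly_Mapping.single 0 (r*s) * f) k = r * s * lk f k" by (simp add: lookup_const_mult)
          then show "r * s dvd lk (Poly_Mapping.single 0 (c1 * c2) * p) k"
            using eq ab by (metis dvd_triv_left)
        qed
        then have "r * s dvd c1 * c2" using cdvd_content[OF G pp] by blast
        then obtain t where t: "c1 * c2 = r * s * t" by (auto simp: dvd_def)
        have "Poly_Mapping.single 0 (r*s) * f = Poly_Mapping.single 0 (r*s) * (Poly_Mapping.single 0 t * p)"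
          using eq ab t by (simp add: single0_mult mult_ac)
        moreover have "Poly_Mapping.single 0 (r*s) \<noteq> (0 :: rat \<Rightarrow>\<^sub>0 'a)"
        proof
          assume "Poly_Mapping.single 0 (r*s) = (0 :: rat \<Rightarrow>\<^sub>0 'a)"
          then have "lk (Poly_Mapping.single 0 (r*s) :: rat \<Rightarrow>\<^sub>0 'a) 0 = lk (0 :: rat \<Rightarrow>\<^sub>0 'a) 0" by simp
          then show False using ra(1) sb(1) by simp
        qed
        ultimately have ft: "f = Poly_Mapping.single 0 t * p" by simp
        have t0: "t \<noteq> 0" using ft f0 by auto
        define a3 where "a3 = Poly_Mapping.single 0 t * a''"
        have f3: "f = a3 * b''" unfolding a3_def ft p_def by (simp add: mult_ac)
        have ks3: "ks a3 \<subseteq> ks A" using keys_const_mult[of t a''] da(4) ra(2) unfolding a3_def by simp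
        have a3S: "a3 \<in> ?S" using ks3 AT by (auto simp: semigroup_ring_def)
        have b3S: "b'' \<in> ?S" using db(4) sb(2) BT by (auto simp: semigroup_ring_def)
        have "unit_in ?S a3 \<or> unit_in ?S b''" using irr a3S b3S f3 unfolding irreducible_in_def by blast
        then show False
        proof
          assume "unit_in ?S b''"
          then have "ks b'' \<subseteq> {0}" using unit_const[OF Mn] by blast
          then show False using Bnc db(4) sb(2) by simp
        next
          assume "unit_in ?S a3"
          then have k3: "ks (a'' * Poly_Mapping.single 0 t) \<subseteq> {0}"
            using unit_const[OF Mn] unfolding a3_def by (simp add: mult.commute)
          have "ks a'' \<subseteq> {q. 0 \<le> q}" using da(4) ra(2) AT Mn by (auto simp: semigroup_ring_def)
          moreover have "ks (Poly_Mapping.single 0 t :: rat \<Rightarrow>\<^sub>0 'a) \<subseteq> {q. 0 \<le> q}" by simp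
          moreover have "a'' \<noteq> 0" using prim_nonzero[OF da(3)] .
          moreover have "(Poly_Mapping.single 0 t :: rat \<Rightarrow>\<^sub>0 'a) \<noteq> 0" using t0 by (rule single_nz)
          ultimately have "ks a'' \<subseteq> {0}" using const_factor k3 by blast
          then show False using Anc da(4) ra(2) by simp
        qed
      qed
    qed
    then show "primitive f \<and> irreducible_in ?T ?F" using pf prim_iff[OF G] by blast
  next
    assume h: "primitive f \<and> irreducible_in ?T ?F"
    have pf: "prim f" using h prim_iff[OF G] by blast
    have irrT: "irreducible_in ?T ?F" using h by blast
    show "irreducible_in ?S f" unfolding irreducible_in_def
    proof (intro conjI ballI impI fS f0)
      show "\<not> unit_in ?S f"
      proof
        assume "unit_in ?S f"
        then have "ks f \<subseteq> {0}" by (rule unit_const[OF Mn])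
        then show False using nc by simp
      qed
      fix a b assume aS: "a \<in> ?S" and bS: "b \<in> ?S" and fab: "f = a * b"
      have aT: "to_frac_ring a \<in> ?T" using aS by (simp add: semigroup_ring_def keys_to_frac)
      have bT: "to_frac_ring b \<in> ?T" using bS by (simp add: semigroup_ring_def keys_to_frac)
      have "?F = to_frac_ring a * to_frac_ring b" using fab by (simp add: to_frac_mult)
      then have "unit_in ?T (to_frac_ring a) \<or> unit_in ?T (to_frac_ring b)"
        using irrT aT bT unfolding irreducible_in_def by blast
      then show "unit_in ?S a \<or> unit_in ?S b"
      proof
        assume "unit_in ?T (to_frac_ring a)"
        then show ?thesis using back_aux[OF Mn M0 pf fab] by blast
      next
        assume "unit_in ?T (to_frac_ring b)"
        moreover have "f = b * a" using fab by (simp add: mult.commute)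
        ultimately show ?thesis using back_aux[OF Mn M0 pf] by blast
      qed
    qed
  qed
qed

end
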